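(* Consider octahedra $p=(p_1,\ldots,p_6)\in(\mathbf{R}^3)^6$ with $p_1$ and $p_6$ opposite vertices and equatorial cycle $p_2,p_3,p_4,p_5$ (so the opposite pairs are $\{1,6\},\{2,4\},\{3,5\}$), and the vector field (gradient of the mean volume) $$X_p=\tfrac16\big(\nu(2,3,4,5),\ \nu(1,5,6,3),\ \nu(1,2,6,4),\ \nu(1,3,6,5),\ \nu(1,4,6,2),\ \nu(2,5,4,3)\big).$$ Then every $X$-optimal $p$ is a regular octahedron (with opposite vertex pairs $\{p_1,p_6\},\{p_2,p_4\},\{p_3,p_5\}$).
   Context: Notation: $\nu(i_1,\ldots,i_k)=p_{i_1}\times p_{i_2}+\cdots+p_{i_{k-1}}\times p_{i_k}+p_{i_k}\times p_{i_1}$. A configuration $p\in(\mathbf{R}^3)^n$ (not all points equal) is called $X$-optimal if there exist $q=\mu p+(c,\ldots,c)$ with $\mu>0$, $c\in\mathbf{R}^3$, and a real number $\lambda\neq0$ such that $X_q=\lambda q$. *)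

theory Defs
  imports "HOL-Analysis.Analysis"
begin

text \<open>Configurations of six points in R^3 are functions p :: nat => real^3;
  only the values at indices 1..6 are relevant.\<close>

definition nu :: "(nat \<Rightarrow> real^3) \<Rightarrow> nat list \<Rightarrow> real^3" where
  "nu p is = (\<Sum>j<length is. cross3 (p (is ! j)) (p (is ! ((j + 1) mod length is))))"

definition Xfield :: "(nat \<Rightarrow> real^3) \<Rightarrow> nat \<Rightarrow> real^3" where
  "Xfield p i = (1/6) *\<^sub>R nu p
     (if i = 1 then [2,3,4,5]
      else if i = 2 then [1,5,6,3]
      else if i = 3 then [1,2,6,4]
      else if i = 4 then [1,3,6,5]
      else if i = 5 then [1,4,6,2]
      else if i = 6 then [2,5,4,3]
      else [])"

definition X_optimal :: "(nat \<Rightarrow> real^3) \<Rightarrow> bool" where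
  "X_optimal p \<longleftrightarrow>
     (\<exists>i\<in>{1..6}. \<exists>j\<in>{1..6}. p i \<noteq> p j) \<and>
     (\<exists>\<mu>::real. \<mu> > 0 \<and> (\<exists>c::real^3. \<exists>l::real. l \<noteq> 0 \<and>
        (\<forall>i\<in>{1..6}. Xfield (\<lambda>k. \<mu> *\<^sub>R p k + c) i = l *\<^sub>R (\<mu> *\<^sub>R p i + c))))"

definition regular_octahedron :: "(nat \<Rightarrow> real^3) \<Rightarrow> bool" where
  "regular_octahedron p \<longleftrightarrow>
     (\<exists>c u v w :: real^3.
        norm u > 0 \<and> norm v = norm u \<and> norm w = norm u \<and>
        u \<bullet> v = 0 \<and> u \<bullet> w = 0 \<and> v \<bullet> w = 0 \<and>
        p 1 = c + u \<and> p 6 = c - u \<and>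
        p 2 = c + v \<and> p 4 = c - v \<and>
        p 3 = c + w \<and> p 5 = c - w)"

end

theory Submission
  imports Defs
begin

lemma s4: "(\<Sum>j<(4::nat). f j) = f 0 + f 1 + f 2 + (f 3::real^3)"
  by (simp add: eval_nat_numeral)

lemma nu4: "nu q [a,b,c,d] = cross3 (q a) (q b) + cross3 (q b) (q c) + cross3 (q c) (q d) + cross3 (q d) (q a)"
  unfolding nu_def by (simp add: s4)

lemma sq_cancel:
  fixes K A B D :: real
  assumes "D \<noteq> 0" "A \<ge> 0" "B \<ge> 0" "K*A = B*D" "K*B = D*A"
  shows "A = B"
proof -
  have "D*(B*B) = B*(B*D)" by (simp add: algebra_simps)
  also have "\<dots> = B*(K*A)" using assms(4) by simp
  also have "\<dots> = A*(K*B)" by (simp add: algebra_simps)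
  also have "\<dots> = A*(D*A)" using assms(5) by simp
  also have "\<dots> = D*(A*A)" by (simp add: algebra_simps)
  finally have "D*(B*B) = D*(A*A)" .
  hence "B*B = A*A" using assms(1) by simp
  hence "A^2 = B^2" by (simp add: power2_eq_square)
  thus ?thesis using assms(2,3) power2_eq_iff_nonneg by blast
qed

lemma real_sys:
  fixes K A B D :: real
  assumes "K > 0" "A \<ge> 0" "B \<ge> 0" "D \<ge> 0" "K*A = B*D" "K*B = D*A" "K*D = A*B"
    and "\<not> (A = 0 \<and> B = 0 \<and> D = 0)"
  shows "A = K \<and> B = K \<and> D = K"
proof -
  have nz: "A \<noteq> 0" "B \<noteq> 0" "D \<noteq> 0"
    using assms by auto
  have AB: "A = B" using sq_cancel[of D A B K] nz assms by simp
  have BD: "B = D" using sq_cancel[of A B D K] nz assms by (simp add: mult.commute)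
  have "K*A = A*A" using assms(5) AB BD by simp
  hence "K = A" using nz by simp
  thus ?thesis using AB BD by simp
qed

theorem mainTheorem8:
  fixes p :: "nat \<Rightarrow> real^3"
  assumes "X_optimal p"
  shows "regular_octahedron p"
proof -
  obtain i0 j0 where ij: "i0 \<in> {1..6}" "j0 \<in> {1..6}" "p i0 \<noteq> p j0"
    using assms unfolding X_optimal_def by blast
  obtain \<mu> c l where mu: "\<mu> > 0" and l: "l \<noteq> 0"
    and X: "\<forall>i\<in>{1..6}. Xfield (\<lambda>k. \<mu> *\<^sub>R p k + c) i = l *\<^sub>R (\<mu> *\<^sub>R p i + c)"
    using assms unfolding X_optimal_def by blast
  define q where "q = (\<lambda>k. \<mu> *\<^sub>R p k + c)"
  have Xq: "Xfield q i = l *\<^sub>R q i" if "i \<in> {1..6}" for i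
    using X that unfolding q_def by blast
  define a where "a = q 1"
  define b where "b = q 2"
  define d where "d = q 3"
  define f where "f = q 4"
  define g where "g = q 5"
  define e where "e = q 6"
  have E1: "l *\<^sub>R a = (1/6) *\<^sub>R (cross3 b d + cross3 d f + cross3 f g + cross3 g b)"
    using Xq[of 1] by (simp add: Xfield_def nu4 a_def b_def d_def f_def g_def)
  have E2: "l *\<^sub>R b = (1/6) *\<^sub>R (cross3 a g + cross3 g e + cross3 e d + cross3 d a)"
    using Xq[of 2] by (simp add: Xfield_def nu4 a_def b_def d_def e_def g_def)
  have E3: "l *\<^sub>R d = (1/6) *\<^sub>R (cross3 a b + cross3 b e + cross3 e f + cross3 f a)"
    using Xq[of 3] by (simp add: Xfield_def nu4 a_def b_def d_def e_def f_def)
  have E4: "l *\<^sub>R f = (1/6) *\<^sub>R (cross3 a d + cross3 d e + cross3 e g + cross3 g a)"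
    using Xq[of 4] by (simp add: Xfield_def nu4 a_def f_def d_def e_def g_def)
  have E5: "l *\<^sub>R g = (1/6) *\<^sub>R (cross3 a f + cross3 f e + cross3 e b + cross3 b a)"
    using Xq[of 5] by (simp add: Xfield_def nu4 a_def b_def f_def e_def g_def)
  have E6: "l *\<^sub>R e = (1/6) *\<^sub>R (cross3 b g + cross3 g f + cross3 f d + cross3 d b)"
    using Xq[of 6] by (simp add: Xfield_def nu4 b_def d_def e_def f_def g_def)
  have "cross3 b g + cross3 g f + cross3 f d + cross3 d b = -(cross3 b d + cross3 d f + cross3 f g + cross3 g b)"
    by (simp add: cross_skew[of b g] cross_skew[of g f] cross_skew[of f d] cross_skew[of d b] algebra_simps)
  hence "l *\<^sub>R e = l *\<^sub>R (- a)" by (simp only: E6 scaleR_minus_right E1[symmetric])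
  hence ea: "e = - a" using l by (metis scaleR_cancel_left)
  have "cross3 a d + cross3 d e + cross3 e g + cross3 g a = -(cross3 a g + cross3 g e + cross3 e d + cross3 d a)"
    by (simp add: cross_skew[of a d] cross_skew[of d e] cross_skew[of e g] cross_skew[of g a] algebra_simps)
  hence "l *\<^sub>R f = l *\<^sub>R (- b)" by (simp only: E4 scaleR_minus_right E2[symmetric])
  hence fb: "f = - b" using l by (metis scaleR_cancel_left)
  have "cross3 a f + cross3 f e + cross3 e b + cross3 b a = -(cross3 a b + cross3 b e + cross3 e f + cross3 f a)"
    by (simp add: cross_skew[of a f] cross_skew[of f e] cross_skew[of e b] cross_skew[of b a] algebra_simps)
  hence "l *\<^sub>R g = l *\<^sub>R (- d)" by (simp only: E5 scaleR_minus_right E3[symmetric])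
  hence gd: "g = - d" using l by (metis scaleR_cancel_left)
  define k where "k = 3 * l / 2"
  have k0: "k \<noteq> 0" using l by (simp add: k_def)
  have S1: "cross3 b d + cross3 d f + cross3 f g + cross3 g b = 4 *\<^sub>R cross3 b d"
    by (simp add: fb gd cross3_simps forall_3)
  have S2: "cross3 a g + cross3 g e + cross3 e d + cross3 d a = 4 *\<^sub>R cross3 d a"
    by (simp add: ea gd cross3_simps forall_3)
  have S3: "cross3 a b + cross3 b e + cross3 e f + cross3 f a = 4 *\<^sub>R cross3 a b"
    by (simp add: ea fb cross3_simps forall_3)
  have F1: "k *\<^sub>R a = cross3 b d"
  proof -
    have "k *\<^sub>R a = (3/2) *\<^sub>R (l *\<^sub>R a)" by (simp add: k_def)
    also have "\<dots> = cross3 b d" unfolding E1 S1 by simp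
    finally show ?thesis .
  qed
  have F2: "k *\<^sub>R b = cross3 d a"
  proof -
    have "k *\<^sub>R b = (3/2) *\<^sub>R (l *\<^sub>R b)" by (simp add: k_def)
    also have "\<dots> = cross3 d a" unfolding E2 S2 by simp
    finally show ?thesis .
  qed
  have F3: "k *\<^sub>R d = cross3 a b"
  proof -
    have "k *\<^sub>R d = (3/2) *\<^sub>R (l *\<^sub>R d)" by (simp add: k_def)
    also have "\<dots> = cross3 a b" unfolding E3 S3 by simp
    finally show ?thesis .
  qed
  have "k * (a \<bullet> b) = (k *\<^sub>R a) \<bullet> b" by simp
  also have "\<dots> = b \<bullet> cross3 b d" unfolding F1 by (rule inner_commute)
  also have "\<dots> = 0" by (rule dot_cross_self(1))
  finally have "k * (a \<bullet> b) = 0" .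
  hence ab: "a \<bullet> b = 0" using k0 by simp
  have "k * (a \<bullet> d) = (k *\<^sub>R a) \<bullet> d" by simp
  also have "\<dots> = 0" unfolding F1 by (rule dot_cross_self(3))
  finally have "k * (a \<bullet> d) = 0" .
  hence ad: "a \<bullet> d = 0" using k0 by simp
  have "k * (b \<bullet> d) = (k *\<^sub>R b) \<bullet> d" by simp
  also have "\<dots> = d \<bullet> cross3 d a" unfolding F2 by (rule inner_commute)
  also have "\<dots> = 0" by (rule dot_cross_self(1))
  finally have "k * (b \<bullet> d) = 0" .
  hence bd: "b \<bullet> d = 0" using k0 by simp
  have nc: "norm (cross3 x y) = norm x * norm y" if "x \<bullet> y = 0" for x y :: "real^3"
    using norm_cross_dot[of x y] that by (simp add: power_mult_distrib[symmetric] power2_eq_iff_nonneg)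
  have da: "d \<bullet> a = 0" using ad by (simp add: inner_commute)
  have "\<bar>k\<bar> * norm a = norm (k *\<^sub>R a)" by simp
  also have "\<dots> = norm b * norm d" unfolding F1 by (rule nc[OF bd])
  finally have N1: "\<bar>k\<bar> * norm a = norm b * norm d" .
  have "\<bar>k\<bar> * norm b = norm (k *\<^sub>R b)" by simp
  also have "\<dots> = norm d * norm a" unfolding F2 by (rule nc[OF da])
  finally have N2: "\<bar>k\<bar> * norm b = norm d * norm a" .
  have "\<bar>k\<bar> * norm d = norm (k *\<^sub>R d)" by simp
  also have "\<dots> = norm a * norm b" unfolding F3 by (rule nc[OF ab])
  finally have N3: "\<bar>k\<bar> * norm d = norm a * norm b" .
  have n0: "\<not> (norm a = 0 \<and> norm b = 0 \<and> norm d = 0)"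
  proof
    assume "norm a = 0 \<and> norm b = 0 \<and> norm d = 0"
    hence z: "q 1 = 0" "q 2 = 0" "q 3 = 0" unfolding a_def b_def d_def by auto
    have z2: "q 4 = 0" "q 5 = 0" "q 6 = 0" using z fb gd ea
      unfolding b_def d_def a_def e_def f_def g_def by auto
    have "q i = 0" if "i \<in> {1..6}" for i
    proof -
      have "i = 1 \<or> i = 2 \<or> i = 3 \<or> i = 4 \<or> i = 5 \<or> i = 6" using that by auto
      thus ?thesis using z z2 by auto
    qed
    hence "q i0 = q j0" using ij by simp
    hence "\<mu> *\<^sub>R p i0 = \<mu> *\<^sub>R p j0" unfolding q_def by simp
    thus False using ij mu by simp
  qed
  have R: "norm a = \<bar>k\<bar> \<and> norm b = \<bar>k\<bar> \<and> norm d = \<bar>k\<bar>"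
    using real_sys[of "\<bar>k\<bar>" "norm a" "norm b" "norm d"] N1 N2 N3 n0 k0 by simp
  have pinv: "p i = (1/\<mu>) *\<^sub>R (q i - c)" for i
    using mu unfolding q_def by simp
  show ?thesis unfolding regular_octahedron_def
  proof (intro exI conjI)
    let ?c = "- (1/\<mu>) *\<^sub>R c"
    show "0 < norm ((1/\<mu>) *\<^sub>R a)" using R k0 mu by simp
    show "norm ((1/\<mu>) *\<^sub>R b) = norm ((1/\<mu>) *\<^sub>R a)" using R by simp
    show "norm ((1/\<mu>) *\<^sub>R d) = norm ((1/\<mu>) *\<^sub>R a)" using R by simp
    show "((1/\<mu>) *\<^sub>R a) \<bullet> ((1/\<mu>) *\<^sub>R b) = 0" using ab by simp
    show "((1/\<mu>) *\<^sub>R a) \<bullet> ((1/\<mu>) *\<^sub>R d) = 0" using ad by simp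
    show "((1/\<mu>) *\<^sub>R b) \<bullet> ((1/\<mu>) *\<^sub>R d) = 0" using bd by simp
    show "p 1 = ?c + (1/\<mu>) *\<^sub>R a" using pinv[of 1] unfolding a_def by (simp add: algebra_simps)
    show "p 6 = ?c - (1/\<mu>) *\<^sub>R a" by (subst pinv[of 6]) (simp add: ea[unfolded e_def] scaleR_diff_right)
    show "p 2 = ?c + (1/\<mu>) *\<^sub>R b" using pinv[of 2] unfolding b_def by (simp add: algebra_simps)
    show "p 4 = ?c - (1/\<mu>) *\<^sub>R b" by (subst pinv[of 4]) (simp add: fb[unfolded f_def] scaleR_diff_right)
    show "p 3 = ?c + (1/\<mu>) *\<^sub>R d" using pinv[of 3] unfolding d_def by (simp add: algebra_simps)
    show "p 5 = ?c - (1/\<mu>) *\<^sub>R d" by (subst pinv[of 5]) (simp add: gd[unfolded g_def] scaleR_diff_right)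
  qed
qed

end
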